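(* If $u$ is a word such that the attribute $(x_i,y_i)$ of every position $i$ satisfies $x_i + y_i \leq k+1$, then $u$ has minimal length within its $\sim_k$-class.
   Context: $A$ is a finite alphabet and $k\in\mathbb{N}$. Simon's congruence $u\sim_k v$ holds iff $u$ and $v$ have the same (scattered) subwords of length at most $k$. An $\mathsf{X}$-ranker is a nonempty word over $\{\mathsf{X}_a : a\in A\}$ ("go to the next $a$-position", starting with the first $a$-position) and a $\mathsf{Y}$-ranker a nonempty word over $\{\mathsf{Y}_a : a\in A\}$ ("go to the previous $a$-position", starting with the last $a$-position). The attribute of position $i$ is $(x_i,y_i)$, where $x_i$ (resp. $y_i$) is the length of a shortest $\mathsf{X}$-ranker (resp. $\mathsf{Y}$-ranker) reaching $i$. *)

theory Defs
  imports Main "HOL-Library.Sublist"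
begin

text \<open>Positions of a word u are 0, ..., length u - 1.\<close>

definition simon_cong :: "nat \<Rightarrow> 'a list \<Rightarrow> 'a list \<Rightarrow> bool" where
  "simon_cong k u v \<longleftrightarrow> (\<forall>w. length w \<le> k \<longrightarrow> (subseq w u \<longleftrightarrow> subseq w v))"

definition next_pos :: "'a list \<Rightarrow> nat \<Rightarrow> 'a \<Rightarrow> nat option" where
  "next_pos u s a = (if \<exists>j. s \<le> j \<and> j < length u \<and> u ! j = a
     then Some (LEAST j. s \<le> j \<and> j < length u \<and> u ! j = a) else None)"

definition prev_pos :: "'a list \<Rightarrow> nat \<Rightarrow> 'a \<Rightarrow> nat option" where
  "prev_pos u s a = (if \<exists>j. j < s \<and> j < length u \<and> u ! j = a
     then Some (GREATEST j. j < s \<and> j < length u \<and> u ! j = a) else None)"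

text \<open>Run of an X-ranker X_{a1}...X_{an} (given as list of letters a1..an),
  searching from position s: X_{a1} goes to the first a1-position at or after s,
  each further letter moves to the next occurrence strictly after the current position.\<close>
fun xrun :: "'a list \<Rightarrow> nat \<Rightarrow> 'a list \<Rightarrow> nat option" where
  "xrun u s [] = None"
| "xrun u s (a # r) = (case next_pos u s a of None \<Rightarrow> None
     | Some j \<Rightarrow> (if r = [] then Some j else xrun u (Suc j) r))"

fun yrun :: "'a list \<Rightarrow> nat \<Rightarrow> 'a list \<Rightarrow> nat option" where
  "yrun u s [] = None"
| "yrun u s (a # r) = (case prev_pos u s a of None \<Rightarrow> None
     | Some j \<Rightarrow> (if r = [] then Some j else yrun u j r))"

definition X_reach :: "'a list \<Rightarrow> 'a list \<Rightarrow> nat option" where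
  "X_reach u r = xrun u 0 r"

definition Y_reach :: "'a list \<Rightarrow> 'a list \<Rightarrow> nat option" where
  "Y_reach u r = yrun u (length u) r"

definition x_attr :: "'a list \<Rightarrow> nat \<Rightarrow> nat" where
  "x_attr u i = (LEAST n. \<exists>r. r \<noteq> [] \<and> length r = n \<and> X_reach u r = Some i)"

definition y_attr :: "'a list \<Rightarrow> nat \<Rightarrow> nat" where
  "y_attr u i = (LEAST n. \<exists>r. r \<noteq> [] \<and> length r = n \<and> Y_reach u r = Some i)"

end

theory Submission
  imports Defs
begin


lemma subseq_rev1: "subseq xs ys \<Longrightarrow> subseq (rev xs) (rev ys)"
  by (induct rule: list_emb.induct) (auto intro: subseq_rev_drop_many)

lemma subseq_rev: "subseq (rev xs) (rev ys) \<longleftrightarrow> subseq xs ys"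
  using subseq_rev1[of xs ys] subseq_rev1[of "rev xs" "rev ys"] by auto

lemma X_key: "a \<notin> set ys \<Longrightarrow> subseq (a # r) (ys @ a # zs) \<longleftrightarrow> subseq r zs"
  by (induct ys) auto

lemma Y_key: "a \<notin> set zs \<Longrightarrow> subseq (r @ [a]) (ys @ a # zs) \<longleftrightarrow> subseq r ys"
proof -
  assume "a \<notin> set zs"
  hence "subseq (a # rev r) (rev zs @ a # rev ys) \<longleftrightarrow> subseq (rev r) (rev ys)"
    by (intro X_key) auto
  thus ?thesis using subseq_rev[of "r @ [a]" "ys @ a # zs"] subseq_rev[of r ys] by simp
qed

lemma not_subseq_notin: "a \<notin> set ys \<Longrightarrow> a \<in> set r \<Longrightarrow> \<not> subseq r ys"
proof
  assume "a \<notin> set ys" "a \<in> set r" "subseq r ys"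
  then obtain y where "y \<in> set ys" "a = y" using list_emb_set[of "(=)" r ys a] by blast
  thus False using \<open>a \<notin> set ys\<close> by simp
qed

lemma seg_split:
  assumes "s \<le> j" "j < e" "j < length u"
  shows "drop s (take e u) = drop s (take j u) @ u!j # drop (Suc j) (take e u)"
proof -
  have "take e u = take j u @ u!j # drop (Suc j) (take e u)"
    using id_take_nth_drop[of j "take e u"] assms by (simp add: min_def)
  hence "drop s (take e u) = drop s (take j u @ u!j # drop (Suc j) (take e u))" by simp
  also have "\<dots> = drop s (take j u) @ u!j # drop (Suc j) (take e u)"
    using assms by simp
  finally show ?thesis .
qed

lemma notin_seg:
  assumes "\<And>t. s \<le> t \<Longrightarrow> t < e \<Longrightarrow> t < length u \<Longrightarrow> u!t \<noteq> a"
  shows "a \<notin> set (drop s (take e u))"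
proof
  assume "a \<in> set (drop s (take e u))"
  then obtain t where "t < length (drop s (take e u))" "drop s (take e u) ! t = a"
    by (auto simp: in_set_conv_nth)
  then have lt: "s + t < e" "s + t < length u" by auto
  moreover have "drop s (take e u) ! t = u ! (s+t)" using lt by simp
  ultimately show False using assms[of "s+t"] \<open>drop s (take e u) ! t = a\<close> by auto
qed

lemma xrun_char:
  "xrun u s P = Some i \<Longrightarrow> s \<le> i \<and> i < length u \<and> (\<forall>e. subseq P (drop s (take e u)) \<longleftrightarrow> i < e)"
proof (induction u s P rule: xrun.induct)
  case (1 u s)
  then show ?case by simp
next
  case (2 u s a r)
  from "2.prems" obtain j where nj: "next_pos u s a = Some j"
    by (cases "next_pos u s a") auto
  let ?Q = "\<lambda>j. s \<le> j \<and> j < length u \<and> u ! j = a"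
  have ex: "\<exists>j. ?Q j" using nj unfolding next_pos_def by (auto split: if_splits)
  have jdef: "j = (LEAST j. ?Q j)" using nj ex unfolding next_pos_def by auto
  have Qj: "?Q j" using LeastI_ex[OF ex] jdef by simp
  have before: "\<And>t. s \<le> t \<Longrightarrow> t < j \<Longrightarrow> t < length u \<Longrightarrow> u!t \<noteq> a"
    using not_less_Least jdef by blast
  have key: "subseq (a # r) (drop s (take e u)) \<longleftrightarrow> j < e \<and> subseq r (drop (Suc j) (take e u))" for e
  proof (cases "j < e")
    case True
    have na: "a \<notin> set (drop s (take j u))" using before by (intro notin_seg) auto
    have "drop s (take e u) = drop s (take j u) @ a # drop (Suc j) (take e u)"
      using seg_split[of s j e u] Qj True by simp
    then show ?thesis using X_key[OF na] True by simp
  next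
    case False
    have "a \<notin> set (drop s (take e u))" using before False by (intro notin_seg) auto
    then show ?thesis using False not_subseq_notin by fastforce
  qed
  show ?case
  proof (cases "r = []")
    case True
    then show ?thesis using "2.prems" nj Qj key by auto
  next
    case False
    hence xr: "xrun u (Suc j) r = Some i" using "2.prems" nj by simp
    from "2.IH"[OF nj False xr] have IH: "Suc j \<le> i" "i < length u"
      "\<forall>e. subseq r (drop (Suc j) (take e u)) \<longleftrightarrow> i < e" by auto
    then show ?thesis using key Qj by auto
  qed
qed

lemma yrun_char:
  "yrun u s Q = Some i \<Longrightarrow> i < s \<and> i < length u \<and> (\<forall>b. subseq (rev Q) (drop b (take s u)) \<longleftrightarrow> b \<le> i)"
proof (induction u s Q rule: yrun.induct)
  case (1 u s)
  then show ?case by simp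
next
  case (2 u s a r)
  from "2.prems" obtain j where pj: "prev_pos u s a = Some j"
    by (cases "prev_pos u s a") auto
  let ?Q = "\<lambda>j. j < s \<and> j < length u \<and> u ! j = a"
  have ex: "\<exists>j. ?Q j" using pj unfolding prev_pos_def by (auto split: if_splits)
  have jdef: "j = (GREATEST j. ?Q j)" using pj ex unfolding prev_pos_def by auto
  have Qj: "?Q j" using GreatestI_ex_nat[OF ex, of s] jdef by simp
  have after: "\<And>t. j < t \<Longrightarrow> t < s \<Longrightarrow> t < length u \<Longrightarrow> u!t \<noteq> a"
  proof -
    fix t assume "j < t" "t < s" "t < length u"
    show "u!t \<noteq> a"
    proof
      assume "u!t = a"
      hence "t \<le> j" using Greatest_le_nat[of ?Q t s] jdef \<open>t < s\<close> \<open>t < length u\<close> by auto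
      thus False using \<open>j < t\<close> by simp
    qed
  qed
  have key: "subseq (rev r @ [a]) (drop b (take s u)) \<longleftrightarrow> b \<le> j \<and> subseq (rev r) (drop b (take j u))" for b
  proof (cases "b \<le> j")
    case True
    have na: "a \<notin> set (drop (Suc j) (take s u))" using after by (intro notin_seg) auto
    have "drop b (take s u) = drop b (take j u) @ a # drop (Suc j) (take s u)"
      using seg_split[of b j s u] Qj True by simp
    then show ?thesis using Y_key[OF na] True by simp
  next
    case False
    have "a \<notin> set (drop b (take s u))" using after False by (intro notin_seg) auto
    then show ?thesis using False not_subseq_notin by fastforce
  qed
  show ?case
  proof (cases "r = []")
    case True
    then show ?thesis using "2.prems" pj Qj key by auto
  next
    case False
    hence yr: "yrun u j r = Some i" using "2.prems" pj by simp
    from "2.IH"[OF pj False yr] have IH: "i < j" "i < length u"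
      "\<forall>b. subseq (rev r) (drop b (take j u)) \<longleftrightarrow> b \<le> i" by auto
    then show ?thesis using key Qj by auto
  qed
qed



lemma next_pos_self: "s < length u \<Longrightarrow> next_pos u s (u!s) = Some s"
  unfolding next_pos_def by (auto intro!: Least_equality)

lemma prev_pos_self: "j < length u \<Longrightarrow> prev_pos u (Suc j) (u!j) = Some j"
  unfolding prev_pos_def by (auto intro!: Greatest_equality)

lemma xrun_exists: "s \<le> i \<Longrightarrow> i < length u \<Longrightarrow> xrun u s (drop s (take (Suc i) u)) = Some i"
proof (induction "i - s" arbitrary: s)
  case 0
  hence "s = i" by simp
  moreover have "drop i (take (Suc i) u) = [u!i]" using 0
    by (simp add: take_Suc_conv_app_nth)
  ultimately show ?case using next_pos_self[of i u] 0 by simp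
next
  case (Suc x)
  hence si: "s < i" by simp
  have eq: "drop s (take (Suc i) u) = u!s # drop (Suc s) (take (Suc i) u)"
    using Cons_nth_drop_Suc[of s "take (Suc i) u"] si Suc.prems by simp
  have ne: "drop (Suc s) (take (Suc i) u) \<noteq> []" using si Suc.prems by simp
  have "xrun u (Suc s) (drop (Suc s) (take (Suc i) u)) = Some i"
    using Suc.hyps(1)[of "Suc s"] Suc.hyps(2) si Suc.prems by simp
  then show ?case using eq ne next_pos_self[of s u] si Suc.prems by simp
qed

lemma yrun_exists: "i < s \<Longrightarrow> s \<le> length u \<Longrightarrow> yrun u s (rev (drop i (take s u))) = Some i"
proof (induction "s - i" arbitrary: s)
  case 0
  then show ?case by simp
next
  case (Suc x)
  then obtain s' where s: "s = Suc s'" by (cases s) auto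
  have eq: "rev (drop i (take s u)) = u!s' # rev (drop i (take s' u))"
    using s Suc.prems by (simp add: take_Suc_conv_app_nth)
  show ?case
  proof (cases "i = s'")
    case True
    then show ?thesis using eq prev_pos_self[of s' u] s Suc.prems by simp
  next
    case False
    hence "i < s'" using s Suc.prems by simp
    hence "yrun u s' (rev (drop i (take s' u))) = Some i"
      using Suc.hyps(1)[of s'] Suc.hyps(2) s Suc.prems by simp
    moreover have "rev (drop i (take s' u)) \<noteq> []" using \<open>i < s'\<close> s Suc.prems by simp
    ultimately show ?thesis using eq prev_pos_self[of s' u] s Suc.prems by simp
  qed
qed

lemma x_attr_ex: "i < length u \<Longrightarrow> \<exists>P. P \<noteq> [] \<and> length P = x_attr u i \<and> X_reach u P = Some i"
proof -
  assume i: "i < length u"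
  have "\<exists>n r. r \<noteq> [] \<and> length r = n \<and> X_reach u r = Some i"
    using xrun_exists[of 0 i u] i unfolding X_reach_def
    by (intro exI[of _ "length (take (Suc i) u)"] exI[of _ "take (Suc i) u"]) auto
  from LeastI_ex[OF this] show ?thesis unfolding x_attr_def .
qed

lemma y_attr_ex: "i < length u \<Longrightarrow> \<exists>Q. Q \<noteq> [] \<and> length Q = y_attr u i \<and> Y_reach u Q = Some i"
proof -
  assume i: "i < length u"
  have "\<exists>n r. r \<noteq> [] \<and> length r = n \<and> Y_reach u r = Some i"
    using yrun_exists[of i "length u" u] i unfolding Y_reach_def
    by (intro exI[of _ "length (rev (drop i (take (length u) u)))"] exI[of _ "rev (drop i (take (length u) u))"]) auto
  from LeastI_ex[OF this] show ?thesis unfolding y_attr_def .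
qed

lemma X_reach_char: "X_reach u P = Some i \<Longrightarrow> i < length u \<and> (\<forall>e. subseq P (take e u) \<longleftrightarrow> i < e)"
  using xrun_char[of u 0 P i] unfolding X_reach_def by simp

lemma Y_reach_char: "Y_reach u Q = Some i \<Longrightarrow> i < length u \<and> (\<forall>b. subseq (rev Q) (drop b u) \<longleftrightarrow> b \<le> i)"
  using yrun_char[of u "length u" Q i] unfolding Y_reach_def by simp

lemma snoc_split: "subseq P (xs @ [y]) \<Longrightarrow> \<not> subseq P xs \<Longrightarrow> P = butlast P @ [y] \<and> subseq (butlast P) xs"
proof -
  assume a1: "subseq P (xs @ [y])" and a2: "\<not> subseq P xs"
  have "P \<noteq> []" using a2 by auto
  then obtain P' c where P: "P = P' @ [c]" using rev_exhaust by blast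
  have r: "subseq (c # rev P') (y # rev xs)" using a1 P subseq_rev[of P "xs @ [y]"] by simp
  show ?thesis
  proof (cases "c = y")
    case True
    then show ?thesis using r P subseq_rev[of P' xs] by simp
  next
    case False
    hence "subseq (c # rev P') (rev xs)" using r by simp
    hence "subseq P xs" using P subseq_rev[of P xs] by simp
    then show ?thesis using a2 by simp
  qed
qed

lemma cons_split: "subseq Q (y # xs) \<Longrightarrow> \<not> subseq Q xs \<Longrightarrow> Q = y # tl Q \<and> subseq (tl Q) xs"
  by (cases Q) (auto split: if_splits)

lemma rep_count: "subseq (replicate n a) xs \<longleftrightarrow> n \<le> count_list xs a"
proof (induction xs arbitrary: n)
  case Nil
  then show ?case by (cases n) auto
next
  case (Cons x xs)
  show ?case
  proof (cases n)
    case 0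
    then show ?thesis by simp
  next
    case (Suc n')
    show ?thesis
    proof (cases "x = a")
      case True
      then show ?thesis using Suc Cons.IH[of n'] by simp
    next
      case False
      then show ?thesis using Suc Cons.IH[of "Suc n'"] by simp
    qed
  qed
qed

lemma take_mono_sub: "d \<le> e \<Longrightarrow> subseq xs (take d w) \<Longrightarrow> subseq xs (take e w)"
proof -
  assume "d \<le> e" "subseq xs (take d w)"
  hence "subseq xs (take d (take e w))" by (simp add: min_def)
  hence "subseq xs (take d (take e w) @ drop d (take e w))" by (rule list_emb_prefix)
  then show ?thesis by (simp only: append_take_drop_id)
qed



lemma subst_left: "xs = ys \<Longrightarrow> subseq ys zs \<Longrightarrow> subseq xs zs"
  by simp

lemma count_main:
  fixes u v :: "'a list" and PX QY :: "nat \<Rightarrow> 'a list" and a :: 'a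
  assumes cong: "simon_cong k u v"
  and PX: "\<And>i e. i < length u \<Longrightarrow> subseq (PX i) (take e u) \<longleftrightarrow> i < e"
  and QY: "\<And>i b. i < length u \<Longrightarrow> subseq (QY i) (drop b u) \<longleftrightarrow> b \<le> i"
  and len: "\<And>i. i < length u \<Longrightarrow> length (PX i) + length (QY i) \<le> k + 1"
  shows "count_list u a \<le> count_list v a"
proof -
  define cnt where "cnt i = count_list (take (Suc i) u) a" for i
  define n where "n i = length (PX i)" for i
  define m where "m i = length (QY i)" for i
  have cong1: "subseq w v" if "subseq w u" "length w \<le> k" for w
    using cong that unfolding simon_cong_def by blast
  have Pform: "PX i = butlast (PX i) @ [u!i]" and Pbl: "subseq (butlast (PX i)) (take i u)"
    if "i < length u" for i
  proof -
    have "subseq (PX i) (take i u @ [u!i])" using PX[of i "Suc i"] that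
      by (simp add: take_Suc_conv_app_nth)
    moreover have "\<not> subseq (PX i) (take i u)" using PX[of i i] that by simp
    ultimately have c: "PX i = butlast (PX i) @ [u!i] \<and> subseq (butlast (PX i)) (take i u)"
      by (rule snoc_split)
    show "PX i = butlast (PX i) @ [u!i]" using c by (rule conjunct1)
    show "subseq (butlast (PX i)) (take i u)" using c by (rule conjunct2)
  qed
  have Qform: "QY i = u!i # tl (QY i)" and Qtl: "subseq (tl (QY i)) (drop (Suc i) u)"
    if "i < length u" for i
  proof -
    have "subseq (QY i) (u!i # drop (Suc i) u)" using QY[of i i] that
      by (simp add: Cons_nth_drop_Suc)
    moreover have "\<not> subseq (QY i) (drop (Suc i) u)" using QY[of i "Suc i"] that by simp
    ultimately have c: "QY i = u!i # tl (QY i) \<and> subseq (tl (QY i)) (drop (Suc i) u)"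
      by (rule cons_split)
    show "QY i = u!i # tl (QY i)" using c by (rule conjunct1)
    show "subseq (tl (QY i)) (drop (Suc i) u)" using c by (rule conjunct2)
  qed
  have mpos: "1 \<le> m i" if "i < length u" for i
  proof -
    have "QY i \<noteq> []"
    proof
      assume "QY i = []"
      hence "subseq (QY i) (drop (Suc i) u)" by simp
      thus False using QY[of i "Suc i"] that by simp
    qed
    thus ?thesis unfolding m_def by (cases "QY i") auto
  qed
  have npos: "1 \<le> n i" if "i < length u" for i
  proof -
    have "PX i \<noteq> []"
    proof
      assume "PX i = []"
      hence "subseq (PX i) (take 0 u)" by simp
      thus False using PX[of i 0] that by simp
    qed
    thus ?thesis unfolding n_def by (cases "PX i") auto
  qed
  have take_split: "take (Suc l) u = take (Suc j) u @ drop (Suc j) (take (Suc l) u)" if "j \<le> l" for j l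
    using append_take_drop_id[of "Suc j" "take (Suc l) u"] that by (simp add: min_def)
  have cnt_split: "cnt l = cnt j + count_list (drop (Suc j) (take (Suc l) u)) a" if "j \<le> l" for j l
  proof -
    have "count_list (take (Suc l) u) a = count_list (take (Suc j) u @ drop (Suc j) (take (Suc l) u)) a"
      using take_split[OF that] by (rule arg_cong)
    then show ?thesis unfolding cnt_def by simp
  qed
  have cnt_mono: "cnt j \<le> cnt l" if "j \<le> l" for j l
    using cnt_split[OF that] by simp
  have W: "\<exists>w1 w2 w3. v = w1 @ w2 @ w3 \<and> subseq (PX j) w1 \<and> cnt l - cnt j \<le> count_list w2 a
            \<and> subseq (tl (QY l)) w3"
    if jl: "j \<le> l" "l < length u" "n j + (cnt l - cnt j) + m l \<le> k + 1" for j l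
  proof -
    let ?W = "PX j @ replicate (cnt l - cnt j) a @ tl (QY l)"
    have u_split: "take (Suc j) u @ drop (Suc j) (take (Suc l) u) @ drop (Suc l) u = u"
    proof -
      have "take (Suc j) u @ drop (Suc j) (take (Suc l) u) @ drop (Suc l) u
          = (take (Suc j) u @ drop (Suc j) (take (Suc l) u)) @ drop (Suc l) u" by simp
      also have "\<dots> = take (Suc l) u @ drop (Suc l) u"
        by (simp only: take_split[OF jl(1), symmetric])
      finally show ?thesis by simp
    qed
    have s1: "subseq (PX j) (take (Suc j) u)" using PX[of j "Suc j"] jl by simp
    have s2: "subseq (replicate (cnt l - cnt j) a) (drop (Suc j) (take (Suc l) u))"
      unfolding rep_count using cnt_split[OF jl(1)] by simp
    have s3: "subseq (tl (QY l)) (drop (Suc l) u)" using Qtl jl by simp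
    have "subseq ?W (take (Suc j) u @ drop (Suc j) (take (Suc l) u) @ drop (Suc l) u)"
      by (intro list_emb_append_mono s1 s2 s3)
    hence "subseq ?W u" by (simp only: u_split)
    moreover have "length ?W \<le> k" using jl mpos[of l] unfolding n_def m_def by simp
    ultimately have sW: "subseq (PX j @ (replicate (cnt l - cnt j) a @ tl (QY l))) v" by (rule cong1)
    from list_emb_appendD[OF sW] obtain w1 r where r: "v = w1 @ r" "subseq (PX j) w1"
      "subseq (replicate (cnt l - cnt j) a @ tl (QY l)) r"
      by blast
    from list_emb_appendD[OF r(3)] obtain w2 w3 where r2: "r = w2 @ w3"
      "subseq (replicate (cnt l - cnt j) a) w2" "subseq (tl (QY l)) w3"
      by blast
    have "v = w1 @ w2 @ w3" using r(1) r2(1) by simp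
    moreover have "cnt l - cnt j \<le> count_list w2 a" using r2(2) unfolding rep_count .
    ultimately show ?thesis using r(2) r2(3) by blast
  qed
  have F2: "\<not> subseq (butlast (PX i) @ QY i0) u"
    if F2a: "i0 < i" "i < length u" "u!i0 = a" "u!i = a" for i0 i
  proof
    assume sa: "subseq (butlast (PX i) @ QY i0) u"
    from list_emb_appendD[OF sa] obtain z1 z2 where z: "u = z1 @ z2" "subseq (butlast (PX i)) z1" "subseq (QY i0) z2"
      by blast
    have "subseq (QY i0) (drop (length z1) u)" using z by simp
    hence lz: "length z1 \<le> i0" using QY[of i0 "length z1"] F2a(1,2) by simp
    have "subseq (butlast (PX i)) (take (length z1) u)" using z by simp
    hence "subseq (butlast (PX i)) (take i0 u)" using take_mono_sub[OF lz] by blast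
    hence "subseq (butlast (PX i) @ [u!i0]) (take i0 u @ [u!i0])"
      using list_emb_append_mono by fastforce
    hence "subseq (butlast (PX i) @ [u!i]) (take (Suc i0) u)" using F2a
      by (simp add: take_Suc_conv_app_nth)
    hence "subseq (PX i) (take (Suc i0) u)" by (rule subst_left[OF Pform[OF F2a(2)]])
    hence "subseq (PX i) (take i u)" using take_mono_sub[of "Suc i0" i] F2a by simp
    then show False using PX[of i i] F2a by simp
  qed
  define Inv where "Inv i \<longleftrightarrow> (\<exists>j \<le> i. u!j = a \<and> n j + m i + (cnt i - cnt j) \<le> k+1 \<and>
     (\<forall>c. subseq (PX j) (take c v) \<longrightarrow> cnt j \<le> count_list (take c v) a))" for i
  have InvAll: "i < length u \<Longrightarrow> u!i = a \<Longrightarrow> Inv i" for i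
  proof (induction i rule: less_induct)
    case (less i)
    show ?case
    proof (cases "\<exists>i0<i. u!i0 = a")
      case False
      have "a \<notin> set (take i u)" using False
        by (intro notin_seg[of 0 i u a, simplified]) auto
      hence ci: "cnt i = 1" unfolding cnt_def using less.prems
        by (simp add: take_Suc_conv_app_nth)
      have "cnt i \<le> count_list (take c v) a" if "subseq (PX i) (take c v)" for c
      proof -
        have eqP: "PX i = butlast (PX i) @ [a]" using Pform[OF less.prems(1)] unfolding less.prems(2) .
        have "a \<in> set (PX i)" by (subst eqP) simp
        hence "a \<in> set (take c v)" using list_emb_set[OF that] by auto
        hence "count_list (take c v) a \<noteq> 0" by (simp add: count_list_0_iff)
        then show ?thesis using ci by simp
      qed
      then show ?thesis unfolding Inv_def using len[of i] less.prems
        unfolding n_def m_def by (intro exI[of _ i]) auto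
    next
      case True
      define S where "S = {i0. i0 < i \<and> u!i0 = a}"
      have finS: "finite S" unfolding S_def by simp
      have neS: "S \<noteq> {}" using True unfolding S_def by auto
      define i0 where "i0 = Max S"
      have i0S: "i0 \<in> S" using Max_in[OF finS neS] i0_def by simp
      hence i0i: "i0 < i" "u!i0 = a" unfolding S_def by auto
      have i0max: "u!t \<noteq> a" if "i0 < t" "t < i" for t
      proof
        assume "u!t = a"
        hence "t \<in> S" using that unfolding S_def by simp
        hence "t \<le> i0" using Max_ge[OF finS] i0_def by simp
        thus False using that by simp
      qed
      have i0u: "i0 < length u" using i0i less.prems by simp
      have "Inv i0" using less.IH[OF i0i(1) i0u i0i(2)] .
      then obtain j where j: "j \<le> i0" "u!j = a" "n j + m i0 + (cnt i0 - cnt j) \<le> k+1"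
        "\<And>c. subseq (PX j) (take c v) \<Longrightarrow> cnt j \<le> count_list (take c v) a"
        unfolding Inv_def by blast
      have cnti: "cnt i = Suc (cnt i0)"
      proof -
        have "drop (Suc i0) (take (Suc i) u) = drop (Suc i0) (take i u) @ [a]"
          using less.prems i0i by (simp add: take_Suc_conv_app_nth)
        moreover have "a \<notin> set (drop (Suc i0) (take i u))"
          using i0max by (intro notin_seg) auto
        ultimately show ?thesis using cnt_split[of i0 i] i0i by simp
      qed
      have cj: "cnt j \<le> cnt i0" using cnt_mono j(1) by simp
      show ?thesis
      proof (cases "n i + m i0 \<le> k + 1")
        case True
        have "cnt i \<le> count_list (take c v) a" if sc: "subseq (PX i) (take c v)" for c
        proof -
          let ?P' = "butlast (PX i)"
          have eqP: "PX i = ?P' @ [a]" using Pform[OF less.prems(1)] unfolding less.prems(2) .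
          have sP: "subseq (?P' @ [a]) (take c v)" by (rule subst_left[OF eqP[symmetric] sc])
          from list_emb_appendD[OF sP] obtain z1 z2 where z: "take c v = z1 @ z2" "subseq ?P' z1" "subseq [a] z2"
            by blast
          define d where "d = length z1"
          have "d \<le> length (take c v)" unfolding d_def z(1) by simp
          hence dc: "d \<le> c" "d \<le> length v" by simp_all
          have z1d: "z1 = take d v"
          proof -
            have "z1 = take d (take c v)" using z unfolding d_def by simp
            then show ?thesis using dc by (simp add: min_def)
          qed
          have "a \<in> set z2" using z(3) by (simp add: subseq_singleton_left)
          hence "count_list z2 a \<noteq> 0" by (simp add: count_list_0_iff)
          hence cz: "count_list (take c v) a \<ge> count_list z1 a + 1" using z(1)
            by simp
          have "cnt i0 \<le> count_list (take d v) a"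
          proof (rule ccontr)
            assume ass: "\<not> cnt i0 \<le> count_list (take d v) a"
            have "n j + (cnt i0 - cnt j) + m i0 \<le> k + 1" using j by simp
            from W[OF j(1) i0u this] obtain w1 w2 w3 where w: "v = w1 @ w2 @ w3"
              "subseq (PX j) w1" "cnt i0 - cnt j \<le> count_list w2 a" "subseq (tl (QY i0)) w3"
              by blast
            have tw1: "take (length w1) v = w1" using w by simp
            have "cnt j \<le> count_list w1 a" using j(4)[of "length w1"] w(2) tw1 by simp
            define D where "D = length w1 + length w2"
            have tD: "take D v = w1 @ w2" "drop D v = w3" using w unfolding D_def by simp_all
            have cD: "cnt i0 \<le> count_list (take D v) a"
              using tD \<open>cnt j \<le> count_list w1 a\<close> w(3) cj by simp
            have dD: "d < D"
            proof (rule ccontr)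
              assume "\<not> d < D"
              hence tdv: "take d v = take D v @ drop D (take d v)"
                using append_take_drop_id[of D "take d v"] by (simp add: min_def)
              have "count_list (take D v) a \<le> count_list (take d v) a"
                using arg_cong[OF tdv, of "\<lambda>x. count_list x a"] by simp
              thus False using ass cD by simp
            qed
            have tDv: "take D v = take d v @ drop d (take D v)"
              using append_take_drop_id[of d "take D v"] dD by (simp add: min_def)
            have "count_list (take D v) a = count_list (take d v) a + count_list (drop d (take D v)) a"
              using arg_cong[OF tDv, of "\<lambda>x. count_list x a"] by simp
            hence "count_list (drop d (take D v)) a \<noteq> 0" using ass cD by simp
            hence "a \<in> set (drop d (take D v))" by (simp add: count_list_0_iff)
            then obtain y1 y2 where y: "drop d (take D v) = y1 @ a # y2" by (meson split_list)
            have "drop d v = drop d (take D v) @ drop D v"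
            proof -
              have "D \<le> length v" using w unfolding D_def by simp
              hence "drop d v = drop d (take D v @ drop D v)" by simp
              also have "\<dots> = drop d (take D v) @ drop D v"
                unfolding drop_append using dD \<open>D \<le> length v\<close> by simp
              finally show ?thesis .
            qed
            hence dv: "drop d v = y1 @ a # (y2 @ w3)" using y tD by simp
            have eqQ: "QY i0 = a # tl (QY i0)" using Qform[OF i0u] unfolding i0i(2) .
            have "subseq (tl (QY i0)) (y2 @ w3)" using w(4) by (rule list_emb_append2)
            hence "subseq (a # tl (QY i0)) (y1 @ a # (y2 @ w3))" by (intro list_emb_append2) simp
            hence "subseq (a # tl (QY i0)) (drop d v)" using dv by simp
            hence qd: "subseq (QY i0) (drop d v)" by (rule subst_left[OF eqQ])
            have "subseq (?P' @ QY i0) (take d v @ drop d v)"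
              using list_emb_append_mono[OF z(2)[unfolded z1d] qd] .
            hence "subseq (?P' @ QY i0) v" by simp
            moreover have "length (?P' @ QY i0) \<le> k"
              using True npos[of i] less.prems unfolding n_def m_def by simp
            moreover have "subseq (?P' @ QY i0) u \<longleftrightarrow> subseq (?P' @ QY i0) v"
              using cong calculation(2) unfolding simon_cong_def by blast
            ultimately show False using F2[OF i0i(1) less.prems(1) i0i(2) less.prems(2)] by simp
          qed
          then show ?thesis using cz cnti z1d by simp
        qed
        then show ?thesis unfolding Inv_def using len[of i] less.prems
          unfolding n_def m_def by (intro exI[of _ i]) auto
      next
        case False
        have "m i + 1 \<le> m i0" using False len[of i] less.prems unfolding n_def m_def by simp
        hence "n j + m i + (cnt i - cnt j) \<le> k+1" using j(3) cnti cj by simp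
        then show ?thesis unfolding Inv_def using j i0i by (intro exI[of _ j]) auto
      qed
    qed
  qed
  show ?thesis
  proof (cases "a \<in> set u")
    case False
    then show ?thesis by simp
  next
    case True
    define S where "S = {i. i < length u \<and> u!i = a}"
    have finS: "finite S" unfolding S_def by simp
    have neS: "S \<noteq> {}" using True unfolding S_def by (auto simp: in_set_conv_nth)
    define l where "l = Max S"
    have lS: "l \<in> S" using Max_in[OF finS neS] l_def by simp
    hence l: "l < length u" "u!l = a" unfolding S_def by auto
    have lmax: "u!t \<noteq> a" if "l < t" "t < length u" for t
    proof
      assume "u!t = a"
      hence "t \<in> S" using that unfolding S_def by simp
      hence "t \<le> l" using Max_ge[OF finS] l_def by simp
      thus False using that by simp
    qed
    obtain j where j: "j \<le> l" "u!j = a" "n j + m l + (cnt l - cnt j) \<le> k+1"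
        "\<And>c. subseq (PX j) (take c v) \<Longrightarrow> cnt j \<le> count_list (take c v) a"
      using InvAll[OF l] unfolding Inv_def by blast
    have "n j + (cnt l - cnt j) + m l \<le> k + 1" using j by simp
    from W[OF j(1) l(1) this] obtain w1 w2 w3 where w: "v = w1 @ w2 @ w3"
      "subseq (PX j) w1" "cnt l - cnt j \<le> count_list w2 a" by blast
    have tw1: "take (length w1) v = w1" using w by simp
    have "cnt j \<le> count_list w1 a" using j(4)[of "length w1"] w(2) tw1 by simp
    hence cv: "cnt l \<le> count_list v a" using w cnt_mono[OF j(1)] by simp
    have "a \<notin> set (drop (Suc l) (take (length u) u))"
      using lmax by (intro notin_seg) auto
    hence c0: "count_list (drop (Suc l) u) a = 0" by (simp add: count_list_0_iff)
    have "count_list u a = cnt l"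
    proof -
      have e: "count_list (take (Suc l) u @ drop (Suc l) u) a = count_list u a" by simp
      show ?thesis unfolding cnt_def using e[unfolded count_list_append] c0
        by simp
    qed
    then show ?thesis using cv by simp
  qed
qed



theorem theorem8:
  fixes A :: "'a set" and k :: nat and u :: "'a list"
  assumes "finite A" and "u \<in> lists A"
    and "\<forall>i < length u. x_attr u i + y_attr u i \<le> k + 1"
  shows "\<forall>v \<in> lists A. simon_cong k u v \<longrightarrow> length u \<le> length v"
proof (intro ballI impI)
  fix v assume "v \<in> lists A" and cong: "simon_cong k u v"
  define PX where "PX i = (SOME P. P \<noteq> [] \<and> length P = x_attr u i \<and> X_reach u P = Some i)" for i
  define QY where "QY i = rev (SOME Q. Q \<noteq> [] \<and> length Q = y_attr u i \<and> Y_reach u Q = Some i)" for i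
  have PXp: "length (PX i) = x_attr u i \<and> X_reach u (PX i) = Some i" if "i < length u" for i
    using someI_ex[OF x_attr_ex[OF that]] unfolding PX_def by blast
  have QYp: "length (QY i) = y_attr u i \<and> Y_reach u (rev (QY i)) = Some i" if "i < length u" for i
    using someI_ex[OF y_attr_ex[OF that]] unfolding QY_def by simp
  have PX: "subseq (PX i) (take e u) \<longleftrightarrow> i < e" if "i < length u" for i e
    using X_reach_char[of u "PX i" i] PXp[OF that] by blast
  have QY: "subseq (QY i) (drop b u) \<longleftrightarrow> b \<le> i" if "i < length u" for i b
    using Y_reach_char[of u "rev (QY i)" i] QYp[OF that] by simp
  have len: "length (PX i) + length (QY i) \<le> k + 1" if "i < length u" for i
    using assms(3) PXp[OF that] QYp[OF that] that by simp
  have cnt: "count_list u a \<le> count_list v a" for a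
    using count_main[OF cong PX QY len] by blast
  let ?X = "set u \<union> set v"
  have "length u = sum (count_list u) ?X" using sum_count_set[of u ?X] by simp
  also have "\<dots> \<le> sum (count_list v) ?X" by (rule sum_mono) (rule cnt)
  also have "\<dots> = length v" using sum_count_set[of v ?X] by simp
  finally show "length u \<le> length v" .
qed


end
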